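(* Let $n\ge1$, let $\check{\mathbf{F}}\in\mathbb{C}^{n\times n}$ have entries $(\check{\mathbf{F}})_{j,k}=\frac{1}{\sqrt n}\left(\cos\frac{2jk\pi}{n}+i\sin\frac{2jk\pi}{n}\right)$ for $j,k=0,\dots,n-1$, and let $\mathbf{C}:=\operatorname{Diag}(\{\cos\frac{k\pi}{n}\}_{k=0}^{n-1})$, $\mathbf{S}:=\operatorname{Diag}(\{\sin\frac{k\pi}{n}\}_{k=0}^{n-1})$. Then $\mathbf{C}\check{\mathbf{F}}^2\mathbf{S}+\mathbf{S}\check{\mathbf{F}}^2\mathbf{C}=\mathbf{0}$.
   Context: $i$ is the imaginary unit; $\operatorname{Diag}(\{d_k\})$ is the diagonal matrix with diagonal entries $d_0,\dots,d_{n-1}$. *)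

theory Defs
  imports Complex_Main
begin

text \<open>n x n complex matrices are represented as functions nat => nat => complex,
  with indices j,k ranging over {0..<n}. Entries outside this range are irrelevant.\<close>

definition mmult :: "nat \<Rightarrow> (nat \<Rightarrow> nat \<Rightarrow> complex) \<Rightarrow> (nat \<Rightarrow> nat \<Rightarrow> complex) \<Rightarrow> (nat \<Rightarrow> nat \<Rightarrow> complex)" where
  "mmult n A B = (\<lambda>j k. \<Sum>l<n. A j l * B l k)"

definition diag_mat :: "(nat \<Rightarrow> complex) \<Rightarrow> (nat \<Rightarrow> nat \<Rightarrow> complex)" where
  "diag_mat d = (\<lambda>j k. if j = k then d j else 0)"

definition Fcheck :: "nat \<Rightarrow> (nat \<Rightarrow> nat \<Rightarrow> complex)" where
  "Fcheck n = (\<lambda>j k. complex_of_real (1 / sqrt (real n)) *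
      (complex_of_real (cos (2 * real j * real k * pi / real n))
       + \<i> * complex_of_real (sin (2 * real j * real k * pi / real n))))"

definition Cmat :: "nat \<Rightarrow> (nat \<Rightarrow> nat \<Rightarrow> complex)" where
  "Cmat n = diag_mat (\<lambda>k. complex_of_real (cos (real k * pi / real n)))"

definition Smat :: "nat \<Rightarrow> (nat \<Rightarrow> nat \<Rightarrow> complex)" where
  "Smat n = diag_mat (\<lambda>k. complex_of_real (sin (real k * pi / real n)))"

end

theory Submission
  imports Defs
begin

lemma if_mult_zero: "(if P then (x::complex) else 0) * y = (if P then x * y else 0)" by simp

lemma diag_sandwich:
  assumes "j < n" "k < n"
  shows "mmult n (mmult n (diag_mat a) M) (diag_mat b) j k = a j * M j k * b k"
proof -
  have "mmult n (diag_mat a) M j l = a j * M j l" for l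
    using assms by (simp add: mmult_def diag_mat_def if_mult_zero sum.delta)
  then show ?thesis
    using assms by (simp add: mmult_def diag_mat_def if_distrib cong: if_cong)
qed

lemma Fcheck_cis: "Fcheck n j k = complex_of_real (1 / sqrt (real n)) * cis (2 * real j * real k * pi / real n)"
  by (simp add: Fcheck_def cis_conv_exp[symmetric] complex_eq_iff cis.sel)

lemma F2_eq:
  assumes "n \<ge> 1"
  shows "mmult n (Fcheck n) (Fcheck n) j k = complex_of_real (1 / real n) * (\<Sum>l<n. cis (2 * real (j+k) * pi / real n) ^ l)"
proof -
  have sq0: "1 / sqrt (real n) * (1 / sqrt (real n)) = 1 / real n"
    using assms by (simp add: divide_simps)
  have sq: "complex_of_real (1 / sqrt (real n)) * complex_of_real (1 / sqrt (real n)) = complex_of_real (1 / real n)"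
    by (simp only: of_real_mult[symmetric] sq0)
  have "Fcheck n j l * Fcheck n l k = complex_of_real (1 / real n) * cis (2 * real (j+k) * pi / real n) ^ l" for l
  proof -
    have "Fcheck n j l * Fcheck n l k = complex_of_real (1 / sqrt (real n)) * complex_of_real (1 / sqrt (real n)) * (cis (2 * real j * real l * pi / real n) * cis (2 * real l * real k * pi / real n))"
      by (simp add: Fcheck_cis)
    also have "\<dots> = complex_of_real (1 / real n) * cis (real l * (2 * real (j+k) * pi / real n))"
      unfolding sq using assms by (simp add: cis_mult field_simps)
    also have "\<dots> = complex_of_real (1 / real n) * cis (2 * real (j+k) * pi / real n) ^ l"
      by (simp add: DeMoivre)
    finally show ?thesis .
  qed
  then show ?thesis by (simp add: mmult_def sum_distrib_left)
qed

lemma key: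
  assumes "n \<ge> 1"
  shows "mmult n (Fcheck n) (Fcheck n) j k * complex_of_real (sin (real (j+k) * pi / real n)) = 0"
proof (cases "cis (2 * real (j+k) * pi / real n) = 1")
  case True
  define x where "x = real (j+k) * pi / real n"
  have "cos (2 * x) = 1" using True unfolding x_def by (simp add: complex_eq_iff algebra_simps)
  then have "sin x = 0" by (simp add: cos_double_sin)
  then show ?thesis by (simp add: x_def)
next
  case False
  define z where "z = cis (2 * real (j+k) * pi / real n)"
  have "z ^ n = cis (real n * (2 * real (j+k) * pi / real n))" by (simp add: z_def DeMoivre)
  also have "\<dots> = cis (2 * pi * real (j+k))"
    using assms by (intro arg_cong[where f=cis]) simp
  also have "\<dots> = 1" by (rule cis_multiple_2pi) simp
  finally have zn: "z ^ n = 1" .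
  have "(\<Sum>l<n. z ^ l) = 0"
  proof -
    have "z \<noteq> 1" using False by (simp add: z_def)
    then show ?thesis using zn by (simp add: geometric_sum)
  qed
  then show ?thesis using assms by (simp add: F2_eq z_def)
qed

theorem mainTheorem7:
  fixes n :: nat
  assumes "n \<ge> 1"
  shows "\<forall>j<n. \<forall>k<n.
    mmult n (mmult n (Cmat n) (mmult n (Fcheck n) (Fcheck n))) (Smat n) j k
  + mmult n (mmult n (Smat n) (mmult n (Fcheck n) (Fcheck n))) (Cmat n) j k = 0"
proof (intro allI impI)
  fix j k assume jk: "j < n" "k < n"
  let ?M = "mmult n (Fcheck n) (Fcheck n)"
  have "mmult n (mmult n (Cmat n) ?M) (Smat n) j k + mmult n (mmult n (Smat n) ?M) (Cmat n) j k
     = ?M j k * complex_of_real (sin (real j * pi / real n) * cos (real k * pi / real n) + cos (real j * pi / real n) * sin (real k * pi / real n))"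
    unfolding Cmat_def Smat_def using jk by (simp add: diag_sandwich algebra_simps)
  also have "\<dots> = ?M j k * complex_of_real (sin (real (j+k) * pi / real n))"
    by (simp add: sin_add[symmetric] add_divide_distrib distrib_right)
  also have "\<dots> = 0" using key[OF assms] .
  finally show "mmult n (mmult n (Cmat n) ?M) (Smat n) j k + mmult n (mmult n (Smat n) ?M) (Cmat n) j k = 0" .
qed

end
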